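(* Let $s\geq 1$ and $t\geq 3$ be integers and $\delta>0$. Let $G$ be a bipartite graph with bipartition $A\cup B$, $|B|=n$, containing no copy of $L'_{s,t}$ as a subgraph, such that every vertex of $A$ has degree at least $\delta$ in $G$. Then for every subset $U\subseteq A$ with $|U|\geq \frac{8(s+t)n}{\delta}$ and $|U|\geq 2$, the number of light edges of $W_G$ with both endpoints in $U$ is at least $\frac{\delta^2}{8(s+t)^3 n}\binom{|U|}{2}$.
   Context: For a bipartite graph $G$ with bipartition $A\cup B$, write $d_G(u,v)=|N_G(u)\cap N_G(v)|$ for $u,v\in A$, where $N_G(x)$ is the neighbourhood of $x$ in $G$. The neighbourhood graph $W_G$ is the weighted graph on $A$ where the pair $uv$ has weight $d_G(u,v)$. A pair $uv$ of distinct vertices of $A$ is a light edge if $1\leq d_G(u,v)<\binom{s+t-1}{2}$. The subdivision of a graph $L$ is the bipartite graph with parts $V(L)$ and $E(L)$ in which $v\in V(L)$ is adjacent to $e\in E(L)$ iff $v$ is an endpoint of $e$. $L_{s,t}$ is the graph on vertex set $S\cup T$, $S\cap T=\emptyset$, $|S|=s$, $|T|=t-1$, where distinct $x,y$ are adjacent iff $x\in T$ or $y\in T$; $L'_{s,t}$ is its subdivision. *)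

theory Defs
  imports Complex_Main
begin

definition bipartite_graph :: "'a set \<Rightarrow> 'a set \<Rightarrow> ('a \<times> 'a) set \<Rightarrow> bool" where
  "bipartite_graph A B E \<longleftrightarrow> finite A \<and> finite B \<and> A \<inter> B = {} \<and> E \<subseteq> A \<times> B"

definition adj :: "('a \<times> 'a) set \<Rightarrow> 'a \<Rightarrow> 'a \<Rightarrow> bool" where
  "adj E x y \<longleftrightarrow> (x, y) \<in> E \<or> (y, x) \<in> E"

definition nbhd :: "'a set \<Rightarrow> 'a set \<Rightarrow> ('a \<times> 'a) set \<Rightarrow> 'a \<Rightarrow> 'a set" where
  "nbhd A B E x = {y \<in> A \<union> B. adj E x y}"

definition codeg :: "'a set \<Rightarrow> 'a set \<Rightarrow> ('a \<times> 'a) set \<Rightarrow> 'a \<Rightarrow> 'a \<Rightarrow> nat" where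
  "codeg A B E u v = card (nbhd A B E u \<inter> nbhd A B E v)"

text \<open>Light edge of the neighbourhood graph W_G.\<close>
definition light_edge :: "nat \<Rightarrow> nat \<Rightarrow> 'a set \<Rightarrow> 'a set \<Rightarrow> ('a \<times> 'a) set \<Rightarrow> 'a \<Rightarrow> 'a \<Rightarrow> bool" where
  "light_edge s t A B E u v \<longleftrightarrow> u \<in> A \<and> v \<in> A \<and> u \<noteq> v \<and>
     1 \<le> codeg A B E u v \<and> codeg A B E u v < (s + t - 1) choose 2"

definition num_light_edges :: "nat \<Rightarrow> nat \<Rightarrow> 'a set \<Rightarrow> 'a set \<Rightarrow> ('a \<times> 'a) set \<Rightarrow> 'a set \<Rightarrow> nat" where
  "num_light_edges s t A B E U =
     card {{u, v} | u v. u \<in> U \<and> v \<in> U \<and> light_edge s t A B E u v}"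

definition L_S :: "nat \<Rightarrow> (nat + nat) set" where
  "L_S s = Inl ` {..<s}"
definition L_T :: "nat \<Rightarrow> (nat + nat) set" where
  "L_T t = Inr ` {..<t - 1}"
definition L_V :: "nat \<Rightarrow> nat \<Rightarrow> (nat + nat) set" where
  "L_V s t = L_S s \<union> L_T t"
definition L_E :: "nat \<Rightarrow> nat \<Rightarrow> (nat + nat) set set" where
  "L_E s t = {{x, y} | x y. x \<in> L_V s t \<and> y \<in> L_V s t \<and> x \<noteq> y \<and> (x \<in> L_T t \<or> y \<in> L_T t)}"

definition contains_subdivision ::
  "'v set \<Rightarrow> 'v set set \<Rightarrow> 'a set \<Rightarrow> 'a set \<Rightarrow> ('a \<times> 'a) set \<Rightarrow> bool" where
  "contains_subdivision V Es A B E \<longleftrightarrow>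
     (\<exists>f. inj_on f (Inl ` V \<union> Inr ` Es) \<and> f ` (Inl ` V \<union> Inr ` Es) \<subseteq> A \<union> B \<and>
          (\<forall>v\<in>V. \<forall>e\<in>Es. v \<in> e \<longrightarrow> adj E (f (Inl v)) (f (Inr e))))"

definition contains_L'_st :: "nat \<Rightarrow> nat \<Rightarrow> 'a set \<Rightarrow> 'a set \<Rightarrow> ('a \<times> 'a) set \<Rightarrow> bool" where
  "contains_L'_st s t A B E \<longleftrightarrow> contains_subdivision (L_V s t) (L_E s t) A B E"

end

theory Submission
  imports Defs
begin


lemma sdr:
  fixes Es :: "'e set" and S :: "'e \<Rightarrow> 'b set"
  assumes "finite Es" "card Es \<le> c" "\<forall>e\<in>Es. finite (S e) \<and> card (S e) \<ge> c"
  shows "\<exists>h. inj_on h Es \<and> (\<forall>e\<in>Es. h e \<in> S e)"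
  using assms
proof (induction Es rule: finite_induct)
  case empty
  then show ?case by auto
next
  case (insert e F)
  then obtain h where h: "inj_on h F" "\<forall>e\<in>F. h e \<in> S e" by auto
  have cF: "card F < c" using insert by simp
  have "card (h ` F) \<le> card F" by (rule card_image_le[OF insert(1)])
  hence "card (h ` F) < card (S e)" using cF insert by auto
  hence "\<not> S e \<subseteq> h ` F" using insert(1) by (meson card_mono finite_imageI leD)
  then obtain x where x: "x \<in> S e" "x \<notin> h ` F" by auto
  define h' where "h' = h(e := x)"
  have "inj_on h' (insert e F)"
    unfolding h'_def using h(1) x(2) insert(2)
    by (simp add: inj_on_fun_updI, blast)
  moreover have "\<forall>e'\<in>insert e F. h' e' \<in> S e'"
    unfolding h'_def using h(2) x(1) insert(2) by auto
  ultimately show ?case by blast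
qed

lemma nbhd_A_sub_B:
  assumes "bipartite_graph A B E" "u \<in> A"
  shows "nbhd A B E u \<subseteq> B"
  using assms unfolding bipartite_graph_def nbhd_def adj_def by auto

lemma card_LV: "card (L_V s t) = s + (t - 1)"
proof -
  have "card (L_S s) = s" unfolding L_S_def by (simp add: card_image)
  moreover have "card (L_T t) = t - 1" unfolding L_T_def by (simp add: card_image)
  moreover have "L_S s \<inter> L_T t = {}" unfolding L_S_def L_T_def by auto
  ultimately show ?thesis unfolding L_V_def
    by (simp add: card_Un_disjoint L_S_def L_T_def)
qed

lemma finite_LV: "finite (L_V s t)"
  unfolding L_V_def L_S_def L_T_def by auto

lemma LE_sub: "L_E s t \<subseteq> {e. e \<subseteq> L_V s t \<and> card e = 2}"
  unfolding L_E_def by auto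

lemma card_LE: "card (L_E s t) \<le> card (L_V s t) choose 2"
proof -
  have "card (L_E s t) \<le> card {e. e \<subseteq> L_V s t \<and> card e = 2}"
    apply (rule card_mono) using finite_LV apply simp
    by (rule LE_sub)
  also have "\<dots> = card (L_V s t) choose 2" by (rule n_subsets[OF finite_LV])
  finally show ?thesis .
qed



lemma embed:
  assumes bg: "bipartite_graph A B E" and XA: "X \<subseteq> A" and cX: "card X = s + t - 1"
    and t1: "t \<ge> 1"
    and heavy: "\<forall>u\<in>X. \<forall>v\<in>X. u \<noteq> v \<longrightarrow> codeg A B E u v \<ge> (s + t - 1) choose 2"
  shows "contains_L'_st s t A B E"
proof -
  have finA: "finite A" "finite B" "A \<inter> B = {}" using bg unfolding bipartite_graph_def by auto
  have finX: "finite X" using XA finA(1) finite_subset by blast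
  have cV: "card (L_V s t) = card X" using card_LV[of s t] cX t1 by simp
  obtain g where g: "bij_betw g (L_V s t) X" using finite_same_card_bij[OF finite_LV finX cV] by blast
  define S where "S e = (\<Inter>v\<in>e. nbhd A B E (g v))" for e
  have cE: "card (L_E s t) \<le> (s + t - 1) choose 2" using card_LE[of s t] card_LV[of s t] t1 by simp
  have finE: "finite (L_E s t)"
    using finite_subset[OF LE_sub] finite_LV by (metis (no_types, lifting) finite_Pow_iff finite_subset mem_Collect_eq subsetI PowI)
  have "\<forall>e\<in>L_E s t. finite (S e) \<and> card (S e) \<ge> (s + t - 1) choose 2"
  proof
    fix e assume e: "e \<in> L_E s t"
    then obtain x y where xy: "e = {x, y}" "x \<in> L_V s t" "y \<in> L_V s t" "x \<noteq> y"
      unfolding L_E_def by auto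
    have gx: "g x \<in> X" "g y \<in> X" "g x \<noteq> g y" using g xy unfolding bij_betw_def inj_on_def by auto
    have Se: "S e = nbhd A B E (g x) \<inter> nbhd A B E (g y)" unfolding S_def xy by auto
    have fin: "finite (S e)" unfolding Se nbhd_def using finA by auto
    moreover have "card (S e) \<ge> (s + t - 1) choose 2"
      using heavy gx unfolding Se codeg_def by auto
    ultimately show "finite (S e) \<and> card (S e) \<ge> (s + t - 1) choose 2" by simp
  qed
  then obtain h where h: "inj_on h (L_E s t)" "\<forall>e\<in>L_E s t. h e \<in> S e"
    using sdr[OF finE cE] by blast
  have hB: "h e \<in> B" if eE: "e \<in> L_E s t" for e
  proof -
    obtain x y where xy: "e = {x, y}" "x \<in> L_V s t"
      using eE unfolding L_E_def by blast
    have "g x \<in> A" using g xy XA unfolding bij_betw_def by auto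
    moreover have "h e \<in> nbhd A B E (g x)" using h(2) eE xy unfolding S_def by auto
    ultimately show ?thesis using nbhd_A_sub_B[OF bg] by blast
  qed
  have gA: "g v \<in> A" if "v \<in> L_V s t" for v using g that XA unfolding bij_betw_def by auto
  define f where "f = case_sum g h"
  have "inj_on f (Inl ` L_V s t \<union> Inr ` L_E s t)"
  proof (rule inj_onI)
    fix a b assume a: "a \<in> Inl ` L_V s t \<union> Inr ` L_E s t" and b: "b \<in> Inl ` L_V s t \<union> Inr ` L_E s t"
      and eq: "f a = f b"
    have ginj: "inj_on g (L_V s t)" using g unfolding bij_betw_def by blast
    show "a = b"
    proof (cases a)
      case (Inl x) note ax = this
      then have x: "x \<in> L_V s t" using a by auto
      show ?thesis
      proof (cases b)
        case (Inl y)
        then have "y \<in> L_V s t" using b by auto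
        then show ?thesis using ax Inl x eq ginj unfolding f_def inj_on_def by auto
      next
        case (Inr y)
        then have "y \<in> L_E s t" using b by auto
        then show ?thesis using ax Inr x eq gA hB finA(3) unfolding f_def by fastforce
      qed
    next
      case (Inr x) note ax = this
      then have x: "x \<in> L_E s t" using a by auto
      show ?thesis
      proof (cases b)
        case (Inl y)
        then have "y \<in> L_V s t" using b by auto
        then show ?thesis using ax Inl x eq gA hB finA(3) unfolding f_def by fastforce
      next
        case (Inr y)
        then have "y \<in> L_E s t" using b by auto
        then show ?thesis using ax Inr x eq h(1) unfolding f_def inj_on_def by auto
      qed
    qed
  qed
  moreover have "f ` (Inl ` L_V s t \<union> Inr ` L_E s t) \<subseteq> A \<union> B"
    using gA hB unfolding f_def by auto
  moreover have "\<forall>v\<in>L_V s t. \<forall>e\<in>L_E s t. v \<in> e \<longrightarrow> adj E (f (Inl v)) (f (Inr e))"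
  proof (intro ballI impI)
    fix v e assume "v \<in> L_V s t" "e \<in> L_E s t" "v \<in> e"
    hence "h e \<in> nbhd A B E (g v)" using h(2) unfolding S_def by auto
    thus "adj E (f (Inl v)) (f (Inr e))" unfolding f_def nbhd_def by simp
  qed
  ultimately show ?thesis unfolding contains_L'_st_def contains_subdivision_def by blast
qed



definition oc :: "('v \<Rightarrow> 'v \<Rightarrow> bool) \<Rightarrow> 'v set \<Rightarrow> nat" where
  "oc F X = card {(u,v). u \<in> X \<and> v \<in> X \<and> u \<noteq> v \<and> F u v}"

lemma offdiag_card:
  assumes "finite X"
  shows "card {(u,v). u \<in> X \<and> v \<in> X \<and> u \<noteq> v} = card X * card X - card X"
proof -
  have "{(u,v). u \<in> X \<and> v \<in> X \<and> u \<noteq> v} = X \<times> X - (\<lambda>x. (x,x)) ` X" by auto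
  moreover have "card ((\<lambda>x. (x,x)) ` X) = card X" by (simp add: card_image inj_on_def)
  moreover have "(\<lambda>x. (x,x)) ` X \<subseteq> X \<times> X" by auto
  ultimately show ?thesis using assms by (simp add: card_Diff_subset card_cartesian_product)
qed

lemma sq_ineq:
  fixes a b r :: real
  assumes "r > 0"
  shows "a^2 + b^2 / r \<ge> (a + b)^2 / (r + 1)"
proof -
  have "(r * a - b)^2 \<ge> 0" by simp
  hence "r * (r + 1) * a^2 + (r + 1) * b^2 \<ge> r * (a + b)^2" by (simp add: power2_eq_square algebra_simps)
  hence "(r * (r + 1) * a^2 + (r + 1) * b^2) / (r * (r + 1)) \<ge> r * (a + b)^2 / (r * (r + 1))"
    using assms by (intro divide_right_mono) auto
  moreover have "(r * (r + 1) * a^2 + (r + 1) * b^2) / (r * (r + 1)) = a^2 + b^2 / r"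
    using assms by (simp add: add_divide_distrib)
  moreover have "r * (a + b)^2 / (r * (r + 1)) = (a + b)^2 / (r + 1)"
    using assms by simp
  ultimately show ?thesis by simp
qed

lemma many_edges:
  assumes sym: "\<forall>u v. F u v = F v u"
  shows "finite X \<Longrightarrow> (\<forall>Y\<subseteq>X. card Y = r + 2 \<longrightarrow> (\<exists>u\<in>Y. \<exists>v\<in>Y. u \<noteq> v \<and> F u v))
    \<Longrightarrow> real (oc F X) \<ge> real (card X)^2 / real (r + 1) - real (card X)"
proof (induction r arbitrary: X)
  case 0
  have "{(u,v). u \<in> X \<and> v \<in> X \<and> u \<noteq> v \<and> F u v} = {(u,v). u \<in> X \<and> v \<in> X \<and> u \<noteq> v}"
  proof (safe)
    fix u v assume uv: "u \<in> X" "v \<in> X" "u \<noteq> v"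
    hence "{u, v} \<subseteq> X" "card {u, v} = 0 + 2" by auto
    then obtain x y where "x \<in> {u,v}" "y \<in> {u,v}" "x \<noteq> y" "F x y" using 0(2) by blast
    thus "F u v" using sym uv by auto
  qed
  hence "oc F X = card X * card X - card X" unfolding oc_def using offdiag_card[OF 0(1)] by simp
  moreover have "card X \<le> card X * card X" by simp
  ultimately show ?case by (simp add: of_nat_diff power2_eq_square)
next
  case (Suc r)
  show ?case
  proof (cases "X = {}")
    case True
    then show ?thesis by (simp add: oc_def)
  next
    case False
    define deg where "deg u = card {w \<in> X. w \<noteq> u \<and> F u w}" for u
    obtain v where v: "v \<in> X" "\<forall>w\<in>X. deg v \<le> deg w"
    proof -
      have fi: "finite (deg ` X)" "deg ` X \<noteq> {}" using False Suc(2) by auto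
      obtain v where "v \<in> X" "deg v = Min (deg ` X)" using Min_in[OF fi] by auto
      moreover have "\<forall>w\<in>X. Min (deg ` X) \<le> deg w" using Min_le[OF fi(1)] by auto
      ultimately show ?thesis using that by auto
    qed
    define N where "N = {w \<in> X. w \<noteq> v \<and> F v w}"
    define R where "R = X - insert v N"
    have finN: "finite N" "finite R" using Suc(2) unfolding N_def R_def by auto
    have vN: "v \<notin> N" unfolding N_def by auto
    have NX: "insert v N \<subseteq> X" using v(1) unfolding N_def by auto
    have cR: "card R = card X - (deg v + 1)"
      unfolding R_def using NX Suc(2) finN vN by (simp add: card_Diff_subset deg_def N_def)
    have cle: "deg v + 1 \<le> card X"
      using NX Suc(2) finN vN card_mono[OF Suc(2) NX] by (simp add: deg_def N_def)
    have IHR: "real (oc F R) \<ge> real (card R)^2 / real (r + 1) - real (card R)"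
    proof (rule Suc.IH[OF finN(2)], intro allI impI)
      fix Y assume Y0: "Y \<subseteq> R" "card Y = r + 2"
      hence Y: "Y \<subseteq> R \<and> card Y = r + 2" by simp
      have vY: "v \<notin> Y" using Y unfolding R_def by auto
      have finY: "finite Y" using Y finN(2) finite_subset by blast
      have "insert v Y \<subseteq> X" "card (insert v Y) = Suc r + 2"
        using Y v(1) vY finY unfolding R_def by auto
      then obtain x y where xy: "x \<in> insert v Y" "y \<in> insert v Y" "x \<noteq> y" "F x y" using Suc(3) by blast
      have noF: "\<not> F v w" if "w \<in> Y" for w
        using that Y unfolding R_def N_def by auto
      show "\<exists>u\<in>Y. \<exists>v\<in>Y. u \<noteq> v \<and> F u v"
      proof (cases "x = v")
        case True
        then have "y \<in> Y" using xy by auto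
        then show ?thesis using noF xy True by auto
      next
        case False
        then have x: "x \<in> Y" using xy by auto
        show ?thesis
        proof (cases "y = v")
          case True
          then show ?thesis using noF[OF x] xy sym by auto
        next
          case False
          then show ?thesis using x xy by auto
        qed
      qed
    qed
    define Q1 where "Q1 = (SIGMA u:insert v N. {w \<in> X. w \<noteq> u \<and> F u w})"
    define Q2 where "Q2 = {(u,w). u \<in> R \<and> w \<in> R \<and> u \<noteq> w \<and> F u w}"
    define P where "P = {(u,w). u \<in> X \<and> w \<in> X \<and> u \<noteq> w \<and> F u w}"
    have "P \<subseteq> X \<times> X" unfolding P_def by auto
    hence finP: "finite P" using Suc(2) finite_subset by blast
    have "Q1 \<union> Q2 \<subseteq> P" unfolding Q1_def Q2_def P_def R_def using NX by auto
    moreover have "Q1 \<inter> Q2 = {}" unfolding Q1_def Q2_def R_def by auto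
    ultimately have c1: "card Q1 + card Q2 \<le> card P"
    proof -
      have f12: "finite Q1" "finite Q2" using finP \<open>Q1 \<union> Q2 \<subseteq> P\<close> finite_subset by blast+
      have "card (Q1 \<union> Q2) = card Q1 + card Q2" by (rule card_Un_disjoint[OF f12]) fact
      thus ?thesis using card_mono[OF finP \<open>Q1 \<union> Q2 \<subseteq> P\<close>] by simp
    qed
    have c2: "card Q1 = (\<Sum>u\<in>insert v N. deg u)"
      unfolding Q1_def deg_def using finN Suc(2) by (subst card_SigmaI) auto
    have c3: "(\<Sum>u\<in>insert v N. deg u) \<ge> card (insert v N) * deg v"
      using sum_bounded_below[of "insert v N" "deg v" deg] v(2) NX by auto
    have c4: "card (insert v N) = deg v + 1" using finN vN by (simp add: deg_def N_def)
    have key: "oc F X \<ge> oc F R + (deg v + 1) * deg v"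
    proof -
      have "oc F X = card P" "oc F R = card Q2" unfolding oc_def P_def Q2_def by auto
      thus ?thesis using c1 c2 c3 c4 by (simp add: algebra_simps)
    qed
    define a where "a = real (deg v + 1)"
    define b where "b = real (card R)"
    have dab: "real (card X) = a + b" unfolding a_def b_def cR using cle by simp
    have "real (oc F X) \<ge> b^2 / real (r+1) - b + a * (a - 1)"
    proof -
      have "real (oc F X) \<ge> real (oc F R) + real ((deg v + 1) * deg v)" using key
        by (metis of_nat_add of_nat_le_iff)
      moreover have "real ((deg v + 1) * deg v) = a * (a - 1)" unfolding a_def by (simp add: algebra_simps)
      ultimately show ?thesis using IHR unfolding b_def by linarith
    qed
    moreover have "a^2 + b^2 / real (r+1) \<ge> (a + b)^2 / (real (r+1) + 1)"
      by (rule sq_ineq) simp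
    ultimately show ?thesis unfolding dab by (simp add: power2_eq_square algebra_simps)
  qed
qed



lemma cs_ineq:
  fixes x :: "'b \<Rightarrow> real"
  assumes "finite B"
  shows "(\<Sum>b\<in>B. x b)^2 \<le> real (card B) * (\<Sum>b\<in>B. (x b)^2)"
proof -
  have "0 \<le> (\<Sum>i\<in>B. \<Sum>j\<in>B. (x i - x j)^2)" by (intro sum_nonneg) auto
  also have "(\<Sum>i\<in>B. \<Sum>j\<in>B. (x i - x j)^2) = (\<Sum>i\<in>B. \<Sum>j\<in>B. (x i)^2 + (x j)^2 - 2 * (x i * x j))"
    by (simp add: power2_diff mult.assoc)
  also have "\<dots> = (\<Sum>i\<in>B. real (card B) * (x i)^2 + (\<Sum>j\<in>B. (x j)^2) - 2 * x i * (\<Sum>j\<in>B. x j))"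
    by (simp add: sum.distrib sum_subtractf sum_distrib_left mult.assoc)
  also have "\<dots> = 2 * real (card B) * (\<Sum>b\<in>B. (x b)^2) - 2 * (\<Sum>b\<in>B. x b)^2"
    apply (simp add: sum.distrib sum_subtractf sum_distrib_left sum_distrib_right power2_eq_square mult.assoc)
    apply (subst sum.swap)
    apply (simp add: mult.commute)
    done
  finally show ?thesis by simp
qed

lemma sum_swap_card:
  assumes "finite B" "finite P"
  shows "(\<Sum>b\<in>B. card {p\<in>P. R b p}) = (\<Sum>p\<in>P. card {b\<in>B. R b p})"
proof -
  have "(\<Sum>b\<in>B. card {p\<in>P. R b p}) = (\<Sum>b\<in>B. \<Sum>p\<in>P. if R b p then 1 else 0)"
    using assms by (simp add: sum.If_cases Collect_conj_eq)
  also have "\<dots> = (\<Sum>p\<in>P. \<Sum>b\<in>B. if R b p then 1 else 0)" by (rule sum.swap)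
  also have "\<dots> = (\<Sum>p\<in>P. card {b\<in>B. R b p})"
    using assms by (simp add: sum.If_cases Collect_conj_eq)
  finally show ?thesis .
qed

lemma card_fibre2:
  assumes "finite P" "\<forall>y\<in>f ` P. card {p\<in>P. f p = y} \<le> 2"
  shows "card P \<le> 2 * card (f ` P)"
proof -
  have "P = (\<Union>y\<in>f ` P. {p\<in>P. f p = y})" by auto
  hence "card P \<le> (\<Sum>y\<in>f ` P. card {p\<in>P. f p = y})"
    using card_UN_le[of "f ` P" "\<lambda>y. {p\<in>P. f p = y}"] assms(1) by simp
  also have "\<dots> \<le> (\<Sum>y\<in>f ` P. 2)" by (rule sum_mono) (use assms(2) in auto)
  finally show ?thesis by simp
qed



theorem corollary11:
  fixes s t n :: nat and \<delta> :: real and A B :: "'a set" and E :: "('a \<times> 'a) set"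
  assumes "s \<ge> 1" and "t \<ge> 3" and "\<delta> > 0"
    and "bipartite_graph A B E" and "card B = n"
    and "\<not> contains_L'_st s t A B E"
    and "\<forall>u\<in>A. real (card (nbhd A B E u)) \<ge> \<delta>"
  shows "\<forall>U. U \<subseteq> A \<and> real (card U) \<ge> 8 * real (s + t) * real n / \<delta> \<and> card U \<ge> 2 \<longrightarrow>
           real (num_light_edges s t A B E U)
             \<ge> \<delta>^2 / (8 * real (s + t)^3 * real n) * real (card U choose 2)"
proof (intro allI impI)
  fix U assume HU: "U \<subseteq> A \<and> real (card U) \<ge> 8 * real (s + t) * real n / \<delta> \<and> card U \<ge> 2"
  note s1 = assms(1) and t3 = assms(2) and dpos = assms(3) and bg = assms(4) and cB = assms(5)
    and nocont = assms(6) and degs = assms(7)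
  have finA: "finite A" "finite B" "A \<inter> B = {}" "E \<subseteq> A \<times> B" using bg unfolding bipartite_graph_def by auto
  have UA: "U \<subseteq> A" and mbig: "real (card U) \<ge> 8 * real (s + t) * real n / \<delta>" and m2: "card U \<ge> 2"
    using HU by auto
  have finU: "finite U" using UA finA(1) finite_subset by blast
  define F where "F = light_edge s t A B E"
  define C where "C = (s + t - 1) choose 2"
  have cdsym: "codeg A B E u v = codeg A B E v u" for u v by (simp add: codeg_def Int_commute)
  have symF: "\<forall>u v. F u v = F v u"
    unfolding F_def light_edge_def using cdsym by metis
  have NB: "nbhd A B E u \<subseteq> B" if "u \<in> A" for u using nbhd_A_sub_B[OF bg that] .
  have finN: "finite (nbhd A B E u)" for u unfolding nbhd_def using finA by auto
  have "U \<noteq> {}" using m2 by auto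
  then obtain u0 where u0: "u0 \<in> U" by blast
  have npos: "real n > 0"
  proof -
    have "\<delta> \<le> real (card (nbhd A B E u0))" using degs u0 UA by auto
    also have "\<dots> \<le> real n" using card_mono[OF finA(2) NB[of u0]] u0 UA cB by auto
    finally show ?thesis using dpos by simp
  qed
  define Xb where "Xb b = {u\<in>U. b \<in> nbhd A B E u}" for b
  define r where "r = s + t - 3"
  have r2: "r + 2 = s + t - 1" unfolding r_def using s1 t3 by simp
  have perb: "real (oc F (Xb b)) \<ge> real (card (Xb b))^2 / real (r + 1) - real (card (Xb b))"
    if bB: "b \<in> B" for b
  proof (rule many_edges[OF symF])
    show "finite (Xb b)" unfolding Xb_def using finU by auto
    show "\<forall>Y\<subseteq>Xb b. card Y = r + 2 \<longrightarrow> (\<exists>u\<in>Y. \<exists>v\<in>Y. u \<noteq> v \<and> F u v)"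
    proof (intro allI impI)
      fix Y assume Y: "Y \<subseteq> Xb b" "card Y = r + 2"
      show "\<exists>u\<in>Y. \<exists>v\<in>Y. u \<noteq> v \<and> F u v"
      proof (rule ccontr)
        assume nl: "\<not> (\<exists>u\<in>Y. \<exists>v\<in>Y. u \<noteq> v \<and> F u v)"
        have YA: "Y \<subseteq> A" using Y(1) UA unfolding Xb_def by auto
        have "\<forall>u\<in>Y. \<forall>v\<in>Y. u \<noteq> v \<longrightarrow> codeg A B E u v \<ge> (s + t - 1) choose 2"
        proof (intro ballI impI)
          fix u v assume uv: "u \<in> Y" "v \<in> Y" "u \<noteq> v"
          have "b \<in> nbhd A B E u \<inter> nbhd A B E v" using uv Y(1) unfolding Xb_def by auto
          hence "card (nbhd A B E u \<inter> nbhd A B E v) > 0"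
            using finN[of u] card_gt_0_iff by blast
          hence "codeg A B E u v \<ge> 1" unfolding codeg_def by simp
          moreover have "\<not> F u v" using nl uv by auto
          ultimately show "codeg A B E u v \<ge> (s + t - 1) choose 2"
            using uv YA unfolding F_def light_edge_def by auto
        qed
        hence "contains_L'_st s t A B E" using embed[OF bg YA] Y(2) r2 t3 by auto
        thus False using nocont by simp
      qed
    qed
  qed
  define PU where "PU = {(u,v). u \<in> U \<and> v \<in> U \<and> u \<noteq> v \<and> F u v}"
  have "PU \<subseteq> U \<times> U" unfolding PU_def by auto
  hence finPU: "finite PU" using finU finite_subset by blast
  have ocX: "oc F (Xb b) = card {p\<in>PU. b \<in> nbhd A B E (fst p) \<and> b \<in> nbhd A B E (snd p)}" for b
    unfolding oc_def PU_def Xb_def by (rule arg_cong[where f=card]) auto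
  have sum1: "(\<Sum>b\<in>B. oc F (Xb b)) = (\<Sum>p\<in>PU. card {b\<in>B. b \<in> nbhd A B E (fst p) \<and> b \<in> nbhd A B E (snd p)})"
    unfolding ocX by (rule sum_swap_card[OF finA(2) finPU])
  have "(\<Sum>p\<in>PU. card {b\<in>B. b \<in> nbhd A B E (fst p) \<and> b \<in> nbhd A B E (snd p)}) \<le> (\<Sum>p\<in>PU. C)"
  proof (rule sum_mono)
    fix p assume p: "p \<in> PU"
    then obtain u v where uv: "p = (u,v)" "u \<in> U" "v \<in> U" "F u v" unfolding PU_def by auto
    have "{b\<in>B. b \<in> nbhd A B E (fst p) \<and> b \<in> nbhd A B E (snd p)} = nbhd A B E u \<inter> nbhd A B E v"
      using NB[of u] uv UA by auto
    moreover have "codeg A B E u v < C" using uv(4) unfolding F_def light_edge_def C_def by auto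
    ultimately show "card {b\<in>B. b \<in> nbhd A B E (fst p) \<and> b \<in> nbhd A B E (snd p)} \<le> C"
      unfolding codeg_def by simp
  qed
  hence ocsum: "(\<Sum>b\<in>B. oc F (Xb b)) \<le> card PU * C" using sum1 by simp
  have degsum: "(\<Sum>b\<in>B. card (Xb b)) = (\<Sum>u\<in>U. card (nbhd A B E u))"
  proof -
    have "(\<Sum>b\<in>B. card (Xb b)) = (\<Sum>u\<in>U. card {b\<in>B. b \<in> nbhd A B E u})"
      unfolding Xb_def by (rule sum_swap_card[OF finA(2) finU])
    also have "\<dots> = (\<Sum>u\<in>U. card (nbhd A B E u))"
    proof (rule sum.cong[OF refl])
      fix u assume "u \<in> U"
      hence "nbhd A B E u \<subseteq> B" using NB UA by blast
      hence "{b\<in>B. b \<in> nbhd A B E u} = nbhd A B E u" by blast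
      thus "card {b\<in>B. b \<in> nbhd A B E u} = card (nbhd A B E u)" by simp
    qed
    finally show ?thesis .
  qed
  have "(\<Sum>u\<in>U. real (card (nbhd A B E u))) \<ge> (\<Sum>u\<in>U. \<delta>)"
    by (rule sum_mono) (use degs UA in auto)
  hence Dbig: "(\<Sum>b\<in>B. real (card (Xb b))) \<ge> real (card U) * \<delta>"
  proof -
    have "(\<Sum>b\<in>B. real (card (Xb b))) = real (\<Sum>b\<in>B. card (Xb b))" by simp
    also have "\<dots> = (\<Sum>u\<in>U. real (card (nbhd A B E u)))" unfolding degsum by simp
    finally show ?thesis using \<open>(\<Sum>u\<in>U. real (card (nbhd A B E u))) \<ge> (\<Sum>u\<in>U. \<delta>)\<close> by simp
  qed
  have numl: "card PU \<le> 2 * num_light_edges s t A B E U"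
  proof -
    have img: "{{u, v} | u v. u \<in> U \<and> v \<in> U \<and> light_edge s t A B E u v} = (\<lambda>(u,v). {u,v}) ` PU"
      unfolding PU_def F_def light_edge_def by auto
    have "card PU \<le> 2 * card ((\<lambda>(u,v). {u,v}) ` PU)"
    proof (rule card_fibre2[OF finPU], intro ballI)
      fix y assume "y \<in> (\<lambda>(u,v). {u,v}) ` PU"
      then obtain u v where y: "y = {u,v}" by auto
      have "{p\<in>PU. (\<lambda>(u,v). {u,v}) p = y} \<subseteq> {(u,v),(v,u)}"
      proof
        fix p assume "p \<in> {p\<in>PU. (\<lambda>(u,v). {u,v}) p = y}"
        moreover obtain a c where pac: "p = (a,c)" by (cases p)
        ultimately have p: "p = (a,c)" "{a,c} = {u,v}" using y by auto
        hence "(a = u \<and> c = v) \<or> (a = v \<and> c = u)" by (simp add: doubleton_eq_iff)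
        thus "p \<in> {(u,v),(v,u)}" using p by auto
      qed
      hence "card {p\<in>PU. (\<lambda>(u,v). {u,v}) p = y} \<le> card {(u,v),(v,u)}"
        by (rule card_mono[rotated]) simp
      also have "\<dots> \<le> 2" by (simp add: card_insert_le_m1)
      finally show "card {p\<in>PU. (\<lambda>(u,v). {u,v}) p = y} \<le> 2" .
    qed
    thus ?thesis unfolding num_light_edges_def img .
  qed
  show "real (num_light_edges s t A B E U)
             \<ge> \<delta>^2 / (8 * real (s + t)^3 * real n) * real (card U choose 2)"
  proof -
    define d where "d b = real (card (Xb b))" for b
    define D where "D = (\<Sum>b\<in>B. d b)"
    define k where "k = real (s + t)"
    define rr where "rr = real (r + 1)"
    define X where "X = real (card U) * \<delta>"
    define c where "c = real C"
    define pu where "pu = real (card PU)"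
    define nl where "nl = real (num_light_edges s t A B E U)"
    define nn where "nn = real n"
    have rr1: "rr \<ge> 1" unfolding rr_def by simp
    have rrk: "rr \<le> k" unfolding rr_def k_def r_def using s1 t3 by simp
    have k4: "k \<ge> 4" unfolding k_def using s1 t3 by simp
    have nn0: "nn > 0" unfolding nn_def using npos .
    have pu0: "pu \<ge> 0" "c \<ge> 0" unfolding pu_def c_def by auto
    have sa: "(\<Sum>b\<in>B. real (oc F (Xb b))) \<ge> (\<Sum>b\<in>B. (d b)^2 / rr - d b)"
      by (rule sum_mono) (use perb in \<open>simp add: d_def rr_def\<close>)
    have sb: "(\<Sum>b\<in>B. real (oc F (Xb b))) \<le> pu * c"
    proof -
      have "real (\<Sum>b\<in>B. oc F (Xb b)) \<le> real (card PU * C)" using ocsum by (simp only: of_nat_le_iff)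
      thus ?thesis unfolding pu_def c_def by simp
    qed
    have sc: "(\<Sum>b\<in>B. (d b)^2 / rr - d b) = (\<Sum>b\<in>B. (d b)^2) / rr - D"
      unfolding D_def by (simp add: sum_subtractf sum_divide_distrib)
    have csi: "D^2 \<le> nn * (\<Sum>b\<in>B. (d b)^2)"
      unfolding D_def nn_def using cs_ineq[OF finA(2), of d] cB by simp
    have X8: "X \<ge> 8 * k * nn"
      using mbig dpos unfolding X_def k_def nn_def by (simp add: pos_divide_le_eq)
    have DX: "D \<ge> X" using Dbig unfolding D_def d_def X_def .
    have "8 * k * nn > 0" using k4 nn0 by simp
    hence X0: "X \<ge> 0" using X8 by linarith
    have step1: "pu * c \<ge> (\<Sum>b\<in>B. (d b)^2) / rr - D" using sa sb sc by linarith
    have step2: "nn * rr * (pu * c) \<ge> D^2 - nn * rr * D"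
    proof -
      have "nn * rr * (pu * c) \<ge> nn * rr * ((\<Sum>b\<in>B. (d b)^2) / rr - D)"
        using step1 nn0 rr1 by (intro mult_left_mono) auto
      also have "nn * rr * ((\<Sum>b\<in>B. (d b)^2) / rr - D) = nn * (\<Sum>b\<in>B. (d b)^2) - nn * rr * D"
        using rr1 by (simp add: field_simps)
      finally show ?thesis using csi by linarith
    qed
    have step3: "nn * rr * D \<le> D^2 / 8"
    proof -
      have "nn * rr \<le> nn * k" using rrk nn0 by (intro mult_left_mono) auto
      hence "8 * (nn * rr) \<le> D" using X8 DX by (simp add: algebra_simps)
      hence "D * (8 * (nn * rr)) \<le> D * D" using DX X0 by (intro mult_left_mono) auto
      thus ?thesis by (simp add: power2_eq_square algebra_simps)
    qed
    have step4: "X^2 \<le> D^2" using DX X0 by (intro power_mono) auto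
    have step5: "nn * k * (pu * c) \<ge> nn * rr * (pu * c)"
      using rrk nn0 pu0 by (intro mult_right_mono mult_left_mono) (auto intro: mult_nonneg_nonneg)
    have step6: "8 * (nn * k * (pu * c)) \<ge> 7 * X^2" using step2 step3 step4 step5 by linarith
    have c2: "2 * c \<le> k^2"
    proof -
      have "2 * C \<le> (s + t - 1) * (s + t - 1 - 1)" unfolding C_def choose_two by simp
      also have "\<dots> \<le> (s + t) * (s + t)" by (intro mult_mono) auto
      finally have "real (2 * C) \<le> real ((s + t) * (s + t))" by (simp only: of_nat_le_iff)
      thus ?thesis unfolding c_def k_def by (simp add: power2_eq_square)
    qed
    have nlpu: "pu \<le> 2 * nl"
    proof -
      have "real (card PU) \<le> real (2 * num_light_edges s t A B E U)" using numl by (simp only: of_nat_le_iff)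
      thus ?thesis unfolding pu_def nl_def by simp
    qed
    have step7: "16 * k^3 * nn * nl \<ge> 14 * X^2"
    proof -
      have "14 * X^2 \<le> 2 * (8 * (nn * k * (pu * c)))" using step6 by linarith
      also have "\<dots> = (8 * k * nn * pu) * (2 * c)" by (simp add: algebra_simps)
      also have "\<dots> \<le> (8 * k * nn * pu) * k^2"
        using c2 k4 nn0 pu0 by (intro mult_left_mono) auto
      also have "\<dots> = 8 * k^3 * nn * pu" by (simp add: power3_eq_cube power2_eq_square)
      also have "\<dots> \<le> 8 * k^3 * nn * (2 * nl)"
        using nlpu k4 nn0 by (intro mult_left_mono) auto
      also have "\<dots> = 16 * k^3 * nn * nl" by simp
      finally show ?thesis .
    qed
    have cm: "2 * real (card U choose 2) \<le> real (card U)^2"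
    proof -
      have "2 * (card U * (card U - 1) div 2) \<le> card U * (card U - 1)" by simp
      also have "\<dots> \<le> card U * card U" by simp
      finally have "2 * (card U choose 2) \<le> card U * card U" unfolding choose_two .
      hence "real (2 * (card U choose 2)) \<le> real (card U * card U)" by (simp only: of_nat_le_iff)
      thus ?thesis by (simp add: power2_eq_square)
    qed
    have "\<delta>^2 / (8 * k^3 * nn) * real (card U choose 2) \<le> \<delta>^2 / (8 * k^3 * nn) * (real (card U)^2 / 2)"
      using cm k4 nn0 by (intro mult_left_mono) auto
    also have "\<dots> = X^2 / (16 * k^3 * nn)" unfolding X_def by (simp add: power_mult_distrib field_simps)
    also have "\<dots> \<le> nl"
    proof -
      have "X^2 \<le> 16 * k^3 * nn * nl" using step7 zero_le_power2[of X] by linarith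
      thus ?thesis using k4 nn0 by (simp add: divide_le_eq mult.commute)
    qed
    finally show ?thesis unfolding nl_def k_def nn_def .
  qed
qed


end
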